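(* Let $0<\alpha<n$ and $b$ be locally integrable on $\mathbb{Q}_p^n$. If for some $q(\cdot)\in\mathscr{B}(\mathbb{Q}_p^n)$ there is $C>0$ with $$\sup_{\gamma\in\mathbb{Z},x\in\mathbb{Q}_p^n}\frac{\big\|\big(b-|B_\gamma(x)|_h^{-\alpha/n}\mathcal{M}^p_{\alpha,B_\gamma(x)}(b)\big)\chi_{B_\gamma(x)}\big\|_{L^{q(\cdot)}(\mathbb{Q}_p^n)}}{\|\chi_{B_\gamma(x)}\|_{L^{q(\cdot)}(\mathbb{Q}_p^n)}}\le C,$$ then $b\in\mathrm{BMO}(\mathbb{Q}_p^n)$.
   Context: Fix a prime $p$; $\mathbb{Q}_p^n$ with $|x|_p=\max_j|x_j|_p$; balls $B_\gamma(x)=\{y:|y-x|_p\le p^\gamma\}$; Haar measure with $|B_\gamma(x)|_h=p^{n\gamma}$; $\chi_E$ indicator; $f_B=|B|_h^{-1}\int_Bf$. For a fixed ball $B_*$ and $x\in B_*$, $\mathcal{M}^p_{\alpha,B_*}(f)(x)=\sup\{|B_\gamma(x)|_h^{\alpha/n-1}\int_{B_\gamma(x)}|f|:\gamma\in\mathbb{Z},B_\gamma(x)\subset B_*\}$. $\mathrm{BMO}$: locally integrable $b$ with $\sup_{\gamma,x}|B_\gamma(x)|_h^{-1}\int_{B_\gamma(x)}|b-b_{B_\gamma(x)}|<\infty$. $\mathscr{P}(\mathbb{Q}_p^n)$: measurable $q:\mathbb{Q}_p^n\to(1,\infty)$ with $1<\operatorname{ess\,inf}q\le\operatorname{ess\,sup}q<\infty$.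 $L^{q(\cdot)}$ is normed by $\|f\|_{L^{q(\cdot)}}=\inf\{\eta>0:\int(|f(x)|/\eta)^{q(x)}dx\le1\}$. $\mathscr{B}(\mathbb{Q}_p^n)$ is the set of $q(\cdot)\in\mathscr{P}(\mathbb{Q}_p^n)$ such that the Hardy–Littlewood maximal operator $\mathcal{M}^p(f)(x)=\sup_{\gamma}|B_\gamma(x)|_h^{-1}\int_{B_\gamma(x)}|f|$ is bounded on $L^{q(\cdot)}(\mathbb{Q}_p^n)$. *)

theory Defs
  imports "HOL-Analysis.Analysis" "HOL-Computational_Algebra.Primes"
begin

section \<open>The field Q_p, constructed as Cauchy completion of Q w.r.t. the p-adic absolute value\<close>

definition padic_val_rat :: "nat \<Rightarrow> rat \<Rightarrow> int" where
  "padic_val_rat p r = (case quotient_of r of (a, b) \<Rightarrow>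
      int (multiplicity (int p) a) - int (multiplicity (int p) b))"

definition padic_abs_rat :: "nat \<Rightarrow> rat \<Rightarrow> real" where
  "padic_abs_rat p r = (if r = 0 then 0 else real p powr (- real_of_int (padic_val_rat p r)))"

definition padic_cauchy :: "nat \<Rightarrow> (nat \<Rightarrow> rat) \<Rightarrow> bool" where
  "padic_cauchy p X \<longleftrightarrow>
     (\<forall>e>0. \<exists>N. \<forall>m\<ge>N. \<forall>k\<ge>N. padic_abs_rat p (X m - X k) < e)"

definition padic_equiv :: "nat \<Rightarrow> (nat \<Rightarrow> rat) \<Rightarrow> (nat \<Rightarrow> rat) \<Rightarrow> bool" where
  "padic_equiv p X Y \<longleftrightarrow> (\<lambda>k. padic_abs_rat p (X k - Y k)) \<longlonglongrightarrow> 0"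

type_synonym qp = "(nat \<Rightarrow> rat) set"

definition padic_class :: "nat \<Rightarrow> (nat \<Rightarrow> rat) \<Rightarrow> qp" where
  "padic_class p X = {Y. padic_cauchy p Y \<and> padic_equiv p X Y}"

definition Qp :: "nat \<Rightarrow> qp set" where
  "Qp p = padic_class p ` {X. padic_cauchy p X}"

definition qp_rep :: "qp \<Rightarrow> (nat \<Rightarrow> rat)" where
  "qp_rep x = (SOME X. X \<in> x)"

definition qp_minus :: "nat \<Rightarrow> qp \<Rightarrow> qp \<Rightarrow> qp" where
  "qp_minus p x y = padic_class p (\<lambda>k. qp_rep x k - qp_rep y k)"

definition qp_abs :: "nat \<Rightarrow> qp \<Rightarrow> real" where
  "qp_abs p x = lim (\<lambda>k. padic_abs_rat p (qp_rep x k))"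

type_synonym qpn = "nat \<Rightarrow> qp"

definition Qpn :: "nat \<Rightarrow> nat \<Rightarrow> qpn set" where
  "Qpn p n = PiE {..<n} (\<lambda>_. Qp p)"

definition qpn_norm :: "nat \<Rightarrow> nat \<Rightarrow> qpn \<Rightarrow> real" where
  "qpn_norm p n x = Max ((\<lambda>j. qp_abs p (x j)) ` {..<n})"

definition qpn_dist :: "nat \<Rightarrow> nat \<Rightarrow> qpn \<Rightarrow> qpn \<Rightarrow> real" where
  "qpn_dist p n x y = qpn_norm p n (\<lambda>j. qp_minus p (x j) (y j))"

definition qball :: "nat \<Rightarrow> nat \<Rightarrow> int \<Rightarrow> qpn \<Rightarrow> qpn set" where
  "qball p n \<gamma> x = {y \<in> Qpn p n. qpn_dist p n y x \<le> real p powr real_of_int \<gamma>}"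

definition is_qp_haar :: "nat \<Rightarrow> nat \<Rightarrow> qpn measure \<Rightarrow> bool" where
  "is_qp_haar p n \<mu> \<longleftrightarrow>
     space \<mu> = Qpn p n \<and>
     sets \<mu> = sigma_sets (Qpn p n) {qball p n \<gamma> x | \<gamma> x. x \<in> Qpn p n} \<and>
     (\<forall>\<gamma>. \<forall>x\<in>Qpn p n. emeasure \<mu> (qball p n \<gamma> x) = ennreal (real p powr (real n * real_of_int \<gamma>)))"

definition ball_vol :: "nat \<Rightarrow> nat \<Rightarrow> int \<Rightarrow> real" where
  "ball_vol p n \<gamma> = real p powr (real n * real_of_int \<gamma>)"

definition qp_locally_integrable :: "nat \<Rightarrow> nat \<Rightarrow> qpn measure \<Rightarrow> (qpn \<Rightarrow> real) \<Rightarrow> bool" where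
  "qp_locally_integrable p n \<mu> f \<longleftrightarrow>
     (\<forall>\<gamma>. \<forall>x\<in>Qpn p n. set_integrable \<mu> (qball p n \<gamma> x) f)"

definition var_modular :: "'a measure \<Rightarrow> ('a \<Rightarrow> real) \<Rightarrow> ('a \<Rightarrow> ereal) \<Rightarrow> real \<Rightarrow> ennreal" where
  "var_modular M q f \<eta> =
     (\<integral>\<^sup>+ y. (if \<bar>f y\<bar> = \<infinity> then \<infinity> else ennreal ((real_of_ereal \<bar>f y\<bar> / \<eta>) powr q y)) \<partial>M)"

definition var_lp_norm :: "'a measure \<Rightarrow> ('a \<Rightarrow> real) \<Rightarrow> ('a \<Rightarrow> ereal) \<Rightarrow> ereal" where
  "var_lp_norm M q f = Inf {ereal \<eta> | \<eta>. \<eta> > 0 \<and> var_modular M q f \<eta> \<le> 1}"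

definition var_exp_P :: "'a measure \<Rightarrow> ('a \<Rightarrow> real) \<Rightarrow> bool" where
  "var_exp_P M q \<longleftrightarrow> q \<in> borel_measurable M \<and> (\<forall>y\<in>space M. 1 < q y) \<and>
     (\<exists>c>1. AE y in M. c \<le> q y) \<and> (\<exists>C. AE y in M. q y \<le> C)"

definition hl_maximal :: "nat \<Rightarrow> nat \<Rightarrow> qpn measure \<Rightarrow> (qpn \<Rightarrow> real) \<Rightarrow> qpn \<Rightarrow> ennreal" where
  "hl_maximal p n \<mu> f x = (SUP \<gamma>::int. ennreal (1 / ball_vol p n \<gamma>) *
       (\<integral>\<^sup>+ y\<in>qball p n \<gamma> x. ennreal \<bar>f y\<bar> \<partial>\<mu>))"

definition var_exp_B :: "nat \<Rightarrow> nat \<Rightarrow> qpn measure \<Rightarrow> (qpn \<Rightarrow> real) \<Rightarrow> bool" where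
  "var_exp_B p n \<mu> q \<longleftrightarrow> var_exp_P \<mu> q \<and>
     (\<exists>K::real. \<forall>f. f \<in> borel_measurable \<mu> \<and> var_lp_norm \<mu> q (\<lambda>y. ereal (f y)) < \<infinity> \<longrightarrow>
        var_lp_norm \<mu> q (\<lambda>y. enn2ereal (hl_maximal p n \<mu> f y))
          \<le> ereal K * var_lp_norm \<mu> q (\<lambda>y. ereal (f y)))"

definition frac_max_local :: "nat \<Rightarrow> nat \<Rightarrow> qpn measure \<Rightarrow> real \<Rightarrow> qpn set \<Rightarrow> (qpn \<Rightarrow> real) \<Rightarrow> qpn \<Rightarrow> ennreal" where
  "frac_max_local p n \<mu> \<alpha> B f x = (SUP \<gamma> \<in> {\<gamma>::int. qball p n \<gamma> x \<subseteq> B}.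
       ennreal (ball_vol p n \<gamma> powr (\<alpha> / real n - 1)) *
       (\<integral>\<^sup>+ y\<in>qball p n \<gamma> x. ennreal \<bar>f y\<bar> \<partial>\<mu>))"

definition qp_ball_avg :: "nat \<Rightarrow> nat \<Rightarrow> qpn measure \<Rightarrow> (qpn \<Rightarrow> real) \<Rightarrow> int \<Rightarrow> qpn \<Rightarrow> real" where
  "qp_ball_avg p n \<mu> f \<gamma> x = (1 / ball_vol p n \<gamma>) * (\<integral>y\<in>qball p n \<gamma> x. f y \<partial>\<mu>)"

definition qp_BMO :: "nat \<Rightarrow> nat \<Rightarrow> qpn measure \<Rightarrow> (qpn \<Rightarrow> real) \<Rightarrow> bool" where
  "qp_BMO p n \<mu> b \<longleftrightarrow> qp_locally_integrable p n \<mu> b \<and>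
     (\<exists>K. \<forall>\<gamma>. \<forall>x\<in>Qpn p n.
        qp_ball_avg p n \<mu> (\<lambda>y. \<bar>b y - qp_ball_avg p n \<mu> b \<gamma> x\<bar>) \<gamma> x \<le> K)"

end

theory Submission
  imports Defs
begin


lemma mult_neg_int: "multiplicity (q::int) (- a) = multiplicity q a"
proof (cases "a = 0")
  case True thus ?thesis by simp
next
  case False
  have "multiplicity q (- a) \<le> multiplicity q a"
    by (rule dvd_imp_multiplicity_le) (use False in auto)
  moreover have "multiplicity q a \<le> multiplicity q (- a)"
    by (rule dvd_imp_multiplicity_le) (use False in auto)
  ultimately show ?thesis by simp
qed

lemma pval_repr:
  assumes "prime p" "c \<noteq> 0" "d \<noteq> 0" "r = of_int c / of_int d"
  shows "padic_val_rat p r = int (multiplicity (int p) c) - int (multiplicity (int p) d)"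
proof -
  obtain a b where q: "quotient_of r = (a, b)" by (cases "quotient_of r") auto
  have rab: "r = of_int a / of_int b" using quotient_of_div[OF q] .
  have b0: "b > 0" using quotient_of_denom_pos[OF q] .
  have r0: "r \<noteq> 0" using assms by simp
  hence a0: "a \<noteq> 0" using rab by auto
  have "of_int a / of_int b = (of_int c / of_int d :: rat)" using rab assms(4) by simp
  hence "(of_int (a * d) :: rat) = of_int (c * b)" using b0 assms(3)
    by (simp add: field_simps)
  hence ad: "a * d = c * b" by (simp only: of_int_eq_iff)
  have pe: "prime_elem (int p)" using assms(1) by (simp add: prime_nat_int_transfer)
  have "multiplicity (int p) (a*d) = multiplicity (int p) (c*b)" using ad by simp
  hence "multiplicity (int p) a + multiplicity (int p) d = multiplicity (int p) c + multiplicity (int p) b"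
    using prime_elem_multiplicity_mult_distrib[OF pe] a0 b0 assms(2,3) by simp
  thus ?thesis unfolding padic_val_rat_def q by simp
qed

lemma mult_add_ge:
  assumes "prime p" "x + y \<noteq> (0::int)"
  shows "min (multiplicity (int p) x) (multiplicity (int p) y) \<le> multiplicity (int p) (x + y)"
proof -
  let ?m = "min (multiplicity (int p) x) (multiplicity (int p) y)"
  have nu: "\<not> is_unit (int p)" using assms(1) by (metis prime_nat_int_transfer not_prime_unit)
  have "int p ^ ?m dvd x" by (rule multiplicity_dvd') simp
  moreover have "int p ^ ?m dvd y" by (rule multiplicity_dvd') simp
  ultimately have "int p ^ ?m dvd x + y" by simp
  thus ?thesis using multiplicity_geI[OF assms(2) nu] by blast
qed

lemma pval_add:
  assumes "prime p" "r \<noteq> 0" "s \<noteq> 0" "r + s \<noteq> 0"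
  shows "min (padic_val_rat p r) (padic_val_rat p s) \<le> padic_val_rat p (r + s)"
proof -
  obtain a b where q: "quotient_of r = (a, b)" by (cases "quotient_of r") auto
  obtain a' b' where q': "quotient_of s = (a', b')" by (cases "quotient_of s") auto
  have rab: "r = of_int a / of_int b" using quotient_of_div[OF q] .
  have b0: "b > 0" using quotient_of_denom_pos[OF q] .
  have rab': "s = of_int a' / of_int b'" using quotient_of_div[OF q'] .
  have b0': "b' > 0" using quotient_of_denom_pos[OF q'] .
  have a0: "a \<noteq> 0" using rab assms by auto
  have a0': "a' \<noteq> 0" using rab' assms by auto
  have rs: "r + s = of_int (a*b' + a'*b) / of_int (b*b')" using rab rab' b0 b0'
    by (simp add: field_simps)
  have c0: "a*b' + a'*b \<noteq> 0"
  proof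
    assume "a*b' + a'*b = 0"
    hence "(of_int (a*b' + a'*b) :: rat) = 0" by simp
    thus False using rs assms(4) by simp
  qed
  have pe: "prime_elem (int p)" using assms(1) by (simp add: prime_nat_int_transfer)
  have v1: "padic_val_rat p r = int (multiplicity (int p) a) - int (multiplicity (int p) b)"
    by (rule pval_repr[OF assms(1) a0]) (use b0 rab in auto)
  have v2: "padic_val_rat p s = int (multiplicity (int p) a') - int (multiplicity (int p) b')"
    by (rule pval_repr[OF assms(1) a0']) (use b0' rab' in auto)
  have v3: "padic_val_rat p (r+s) = int (multiplicity (int p) (a*b' + a'*b)) - int (multiplicity (int p) (b*b'))"
    by (rule pval_repr[OF assms(1) c0]) (use b0 b0' rs in auto)
  have m1: "multiplicity (int p) (a*b') = multiplicity (int p) a + multiplicity (int p) b'"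
    using prime_elem_multiplicity_mult_distrib[OF pe] a0 b0' by simp
  have m2: "multiplicity (int p) (a'*b) = multiplicity (int p) a' + multiplicity (int p) b"
    using prime_elem_multiplicity_mult_distrib[OF pe] a0' b0 by simp
  have m3: "multiplicity (int p) (b*b') = multiplicity (int p) b + multiplicity (int p) b'"
    using prime_elem_multiplicity_mult_distrib[OF pe] b0 b0' by simp
  have "min (multiplicity (int p) (a*b')) (multiplicity (int p) (a'*b)) \<le> multiplicity (int p) (a*b' + a'*b)"
    using mult_add_ge[OF assms(1) c0] .
  thus ?thesis using v1 v2 v3 m1 m2 m3 by linarith
qed

lemma pval_neg:
  assumes "prime p" shows "padic_val_rat p (- r) = padic_val_rat p r"
proof (cases "r = 0")
  case True thus ?thesis by simp
next
  case False
  obtain a b where q: "quotient_of r = (a, b)" by (cases "quotient_of r") auto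
  have rab: "r = of_int a / of_int b" using quotient_of_div[OF q] .
  have b0: "b > 0" using quotient_of_denom_pos[OF q] .
  have a0: "a \<noteq> 0" using rab False by auto
  have "padic_val_rat p (- r) = int (multiplicity (int p) (-a)) - int (multiplicity (int p) b)"
    by (rule pval_repr[OF assms]) (use a0 b0 rab in auto)
  moreover have "padic_val_rat p r = int (multiplicity (int p) a) - int (multiplicity (int p) b)"
    by (rule pval_repr[OF assms]) (use a0 b0 rab in auto)
  ultimately show ?thesis by (simp add: mult_neg_int)
qed

lemma pabs_nonneg: "padic_abs_rat p r \<ge> 0"
  unfolding padic_abs_rat_def by simp

lemma pabs_zero[simp]: "padic_abs_rat p 0 = 0"
  unfolding padic_abs_rat_def by simp

lemma pabs_neg: "prime p \<Longrightarrow> padic_abs_rat p (- r) = padic_abs_rat p r"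
  unfolding padic_abs_rat_def by (simp add: pval_neg)

lemma pabs_ultra:
  assumes "prime p"
  shows "padic_abs_rat p (r + s) \<le> max (padic_abs_rat p r) (padic_abs_rat p s)"
proof (cases "r = 0 \<or> s = 0 \<or> r + s = 0")
  case True thus ?thesis using pabs_nonneg[of p r] pabs_nonneg[of p s] by auto
next
  case False
  have p1: "real p > 1" using assms prime_gt_1_nat by simp
  have v: "min (padic_val_rat p r) (padic_val_rat p s) \<le> padic_val_rat p (r + s)"
    using pval_add[OF assms] False by auto
  show ?thesis
  proof (cases "padic_val_rat p r \<le> padic_val_rat p s")
    case True
    hence "- real_of_int (padic_val_rat p (r+s)) \<le> - real_of_int (padic_val_rat p r)" using v by simp
    hence "real p powr (- real_of_int (padic_val_rat p (r+s))) \<le> real p powr (- real_of_int (padic_val_rat p r))"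
      using p1 by (intro powr_mono) auto
    thus ?thesis using False unfolding padic_abs_rat_def by auto
  next
    case F: False
    hence "- real_of_int (padic_val_rat p (r+s)) \<le> - real_of_int (padic_val_rat p s)" using v by simp
    hence "real p powr (- real_of_int (padic_val_rat p (r+s))) \<le> real p powr (- real_of_int (padic_val_rat p s))"
      using p1 by (intro powr_mono) auto
    thus ?thesis using False unfolding padic_abs_rat_def by auto
  qed
qed

lemma pabs_tri: "prime p \<Longrightarrow> padic_abs_rat p (r + s) \<le> padic_abs_rat p r + padic_abs_rat p s"
  using pabs_ultra[of p r s] pabs_nonneg[of p] by (smt (verit))

lemma pabs_rev: "prime p \<Longrightarrow> \<bar>padic_abs_rat p r - padic_abs_rat p s\<bar> \<le> padic_abs_rat p (r - s)"
proof -
  assume pp: "prime p"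
  have 1: "padic_abs_rat p r \<le> padic_abs_rat p (r - s) + padic_abs_rat p s"
    using pabs_tri[OF pp, of "r - s" s] by simp
  have 2: "padic_abs_rat p s \<le> padic_abs_rat p (s - r) + padic_abs_rat p r"
    using pabs_tri[OF pp, of "s - r" r] by simp
  have "padic_abs_rat p (s - r) = padic_abs_rat p (r - s)"
    using pabs_neg[OF pp, of "r - s"] by simp
  thus ?thesis using 1 2 by linarith
qed




lemma cauchy_abs_conv:
  assumes "prime p" "padic_cauchy p X"
  shows "convergent (\<lambda>k. padic_abs_rat p (X k))"
proof -
  have "Cauchy (\<lambda>k. padic_abs_rat p (X k))"
  proof (rule metric_CauchyI)
    fix e :: real assume "e > 0"
    then obtain N where N: "\<forall>m\<ge>N. \<forall>k\<ge>N. padic_abs_rat p (X m - X k) < e"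
      using assms(2) unfolding padic_cauchy_def by blast
    show "\<exists>M. \<forall>m\<ge>M. \<forall>n\<ge>M. dist (padic_abs_rat p (X m)) (padic_abs_rat p (X n)) < e"
    proof (intro exI allI impI)
      fix m k assume "m \<ge> N" "k \<ge> N"
      thus "dist (padic_abs_rat p (X m)) (padic_abs_rat p (X k)) < e"
        using N pabs_rev[OF assms(1), of "X m" "X k"] unfolding dist_real_def by fastforce
    qed
  qed
  thus ?thesis using Cauchy_convergent_iff by blast
qed

lemma cauchy_diff:
  assumes "prime p" "padic_cauchy p X" "padic_cauchy p Y"
  shows "padic_cauchy p (\<lambda>k. X k - Y k)"
  unfolding padic_cauchy_def
proof (intro allI impI)
  fix e :: real assume e: "e > 0"
  obtain N1 where N1: "\<forall>m\<ge>N1. \<forall>k\<ge>N1. padic_abs_rat p (X m - X k) < e/2"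
    using assms(2) e unfolding padic_cauchy_def by (meson half_gt_zero)
  obtain N2 where N2: "\<forall>m\<ge>N2. \<forall>k\<ge>N2. padic_abs_rat p (Y m - Y k) < e/2"
    using assms(3) e unfolding padic_cauchy_def by (meson half_gt_zero)
  show "\<exists>N. \<forall>m\<ge>N. \<forall>k\<ge>N. padic_abs_rat p (X m - Y m - (X k - Y k)) < e"
  proof (intro exI[of _ "max N1 N2"] allI impI)
    fix m k assume "max N1 N2 \<le> m" "max N1 N2 \<le> k"
    hence a: "padic_abs_rat p (X m - X k) < e/2" "padic_abs_rat p (-(Y m - Y k)) < e/2"
      using N1 N2 pabs_neg[OF assms(1)] by auto
    have "X m - Y m - (X k - Y k) = (X m - X k) + (-(Y m - Y k))" by simp
    hence "padic_abs_rat p (X m - Y m - (X k - Y k)) \<le> padic_abs_rat p (X m - X k) + padic_abs_rat p (-(Y m - Y k))"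
      using pabs_tri[OF assms(1)] by metis
    thus "padic_abs_rat p (X m - Y m - (X k - Y k)) < e" using a by linarith
  qed
qed

lemma equiv_lim:
  assumes "prime p" "padic_cauchy p X" "padic_cauchy p Y" "padic_equiv p X Y"
  shows "lim (\<lambda>k. padic_abs_rat p (X k)) = lim (\<lambda>k. padic_abs_rat p (Y k))"
proof -
  have cx: "(\<lambda>k. padic_abs_rat p (X k)) \<longlonglongrightarrow> lim (\<lambda>k. padic_abs_rat p (X k))"
    using cauchy_abs_conv[OF assms(1,2)] convergent_LIMSEQ_iff by blast
  have cy: "(\<lambda>k. padic_abs_rat p (Y k)) \<longlonglongrightarrow> lim (\<lambda>k. padic_abs_rat p (Y k))"
    using cauchy_abs_conv[OF assms(1,3)] convergent_LIMSEQ_iff by blast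
  have d: "(\<lambda>k. padic_abs_rat p (X k - Y k)) \<longlonglongrightarrow> 0" using assms(4) unfolding padic_equiv_def .
  have "(\<lambda>k. padic_abs_rat p (X k) - padic_abs_rat p (Y k)) \<longlonglongrightarrow> 0"
  proof (rule Lim_null_comparison[OF _ d])
    show "\<forall>\<^sub>F k in sequentially. norm (padic_abs_rat p (X k) - padic_abs_rat p (Y k)) \<le> padic_abs_rat p (X k - Y k)"
      using pabs_rev[OF assms(1)] by (simp add: always_eventually)
  qed
  hence "(\<lambda>k. padic_abs_rat p (X k) - (padic_abs_rat p (X k) - padic_abs_rat p (Y k))) \<longlonglongrightarrow> lim (\<lambda>k. padic_abs_rat p (X k)) - 0"
    by (intro tendsto_diff cx)
  hence "(\<lambda>k. padic_abs_rat p (Y k)) \<longlonglongrightarrow> lim (\<lambda>k. padic_abs_rat p (X k))" by simp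
  thus ?thesis using cy LIMSEQ_unique by metis
qed

lemma self_in_class: "padic_cauchy p Z \<Longrightarrow> Z \<in> padic_class p Z"
  unfolding padic_class_def padic_equiv_def by simp

lemma rep_in_class: "padic_cauchy p Z \<Longrightarrow> qp_rep (padic_class p Z) \<in> padic_class p Z"
  unfolding qp_rep_def by (rule someI[of _ Z], rule self_in_class)

lemma rep_cauchy: "a \<in> Qp p \<Longrightarrow> padic_cauchy p (qp_rep a)"
  unfolding Qp_def using rep_in_class unfolding padic_class_def by blast

lemma qp_abs_class:
  assumes "prime p" "padic_cauchy p Z"
  shows "qp_abs p (padic_class p Z) = lim (\<lambda>k. padic_abs_rat p (Z k))"
proof -
  have "qp_rep (padic_class p Z) \<in> padic_class p Z" by (rule rep_in_class[OF assms(2)])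
  hence "padic_cauchy p (qp_rep (padic_class p Z))" "padic_equiv p Z (qp_rep (padic_class p Z))"
    unfolding padic_class_def by auto
  thus ?thesis unfolding qp_abs_def using equiv_lim[OF assms] by metis
qed

definition AA where "AA p a b = qp_abs p (qp_minus p a b)"

lemma AA_eq:
  assumes "prime p" "a \<in> Qp p" "b \<in> Qp p"
  shows "AA p a b = lim (\<lambda>k. padic_abs_rat p (qp_rep a k - qp_rep b k))"
  unfolding AA_def qp_minus_def
  by (rule qp_abs_class[OF assms(1) cauchy_diff[OF assms(1) rep_cauchy rep_cauchy]]) (use assms in auto)

lemma AA_lim:
  assumes "prime p" "a \<in> Qp p" "b \<in> Qp p"
  shows "(\<lambda>k. padic_abs_rat p (qp_rep a k - qp_rep b k)) \<longlonglongrightarrow> AA p a b"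
  unfolding AA_eq[OF assms]
  using cauchy_abs_conv[OF assms(1) cauchy_diff[OF assms(1) rep_cauchy rep_cauchy]] assms
  convergent_LIMSEQ_iff by blast

lemma AA_sym:
  assumes "prime p" "a \<in> Qp p" "b \<in> Qp p"
  shows "AA p a b = AA p b a"
proof -
  have "(\<lambda>k. padic_abs_rat p (qp_rep a k - qp_rep b k)) = (\<lambda>k. padic_abs_rat p (qp_rep b k - qp_rep a k))"
    using pabs_neg[OF assms(1)] by (metis minus_diff_eq)
  thus ?thesis using AA_eq assms by metis
qed

lemma AA_ultra:
  assumes "prime p" "a \<in> Qp p" "b \<in> Qp p" "c \<in> Qp p"
  shows "AA p a c \<le> max (AA p a b) (AA p b c)"
proof (rule LIMSEQ_le[OF AA_lim[OF assms(1,2,4)] tendsto_max[OF AA_lim[OF assms(1,2,3)] AA_lim[OF assms(1,3,4)]]])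
  show "\<exists>N. \<forall>k\<ge>N. padic_abs_rat p (qp_rep a k - qp_rep c k)
     \<le> max (padic_abs_rat p (qp_rep a k - qp_rep b k)) (padic_abs_rat p (qp_rep b k - qp_rep c k))"
    using pabs_ultra[OF assms(1)] by (metis diff_add_cancel add_diff_eq)
qed

lemma qball_same:
  assumes "prime p" "n > 0" "x \<in> Qpn p n" "y \<in> qball p n \<gamma> x"
  shows "qball p n \<gamma> y = qball p n \<gamma> x"
proof -
  let ?r = "real p powr real_of_int \<gamma>"
  have y: "y \<in> Qpn p n" and dyx: "qpn_dist p n y x \<le> ?r" using assms(4) unfolding qball_def by auto
  have fin: "finite ((\<lambda>j. qp_abs p (qp_minus p (u j) (v j))) ` {..<n})" for u v :: qpn by simp
  have ne: "(\<lambda>j. qp_abs p (qp_minus p (u j) (v j))) ` {..<n} \<noteq> {}" for u v :: qpn using assms(2) by auto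
  have dle: "qpn_dist p n u v \<le> t \<longleftrightarrow> (\<forall>j<n. AA p (u j) (v j) \<le> t)" for u v t
    unfolding qpn_dist_def qpn_norm_def AA_def using Max_le_iff[OF fin ne] by auto
  have coord: "u \<in> Qpn p n \<Longrightarrow> j < n \<Longrightarrow> u j \<in> Qp p" for u j
    unfolding Qpn_def by auto
  have tri: "qpn_dist p n z w \<le> ?r" if "z \<in> Qpn p n" "u \<in> Qpn p n" "w \<in> Qpn p n"
    "qpn_dist p n z u \<le> ?r" "qpn_dist p n u w \<le> ?r" for z u w
    unfolding dle
  proof (intro allI impI)
    fix j assume j: "j < n"
    have "AA p (z j) (w j) \<le> max (AA p (z j) (u j)) (AA p (u j) (w j))"
      by (rule AA_ultra) (use assms(1) coord that j in auto)
    moreover have "AA p (z j) (u j) \<le> ?r" "AA p (u j) (w j) \<le> ?r" using that(4,5) j unfolding dle by auto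
    ultimately show "AA p (z j) (w j) \<le> ?r" by linarith
  qed
  have dxy: "qpn_dist p n x y \<le> ?r" using dyx unfolding dle
    using AA_sym[OF assms(1)] coord assms(3) y by metis
  show ?thesis unfolding qball_def
    using tri[OF _ y assms(3) _ dyx] tri[OF _ assms(3) y _ dxy] by blast
qed




lemma norm_nonneg: "0 \<le> var_lp_norm M q f"
  unfolding var_lp_norm_def by (rule Inf_greatest) auto

lemma modular_mono:
  assumes "\<forall>y\<in>space M. \<bar>f y\<bar> \<le> \<bar>g y\<bar>" "\<forall>y\<in>space M. q y > 0" "\<eta> > 0"
  shows "var_modular M q f \<eta> \<le> var_modular M q g \<eta>"
  unfolding var_modular_def
proof (rule nn_integral_mono)
  fix y assume y: "y \<in> space M"
  show "(if \<bar>f y\<bar> = \<infinity> then \<infinity> else ennreal ((real_of_ereal \<bar>f y\<bar> / \<eta>) powr q y))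
     \<le> (if \<bar>g y\<bar> = \<infinity> then \<infinity> else ennreal ((real_of_ereal \<bar>g y\<bar> / \<eta>) powr q y))"
  proof (cases "\<bar>g y\<bar> = \<infinity>")
    case True thus ?thesis by simp
  next
    case False
    have fg: "\<bar>f y\<bar> \<le> \<bar>g y\<bar>" using assms(1) y by auto
    hence fi: "\<bar>f y\<bar> \<noteq> \<infinity>" using False by auto
    have "real_of_ereal \<bar>f y\<bar> \<le> real_of_ereal \<bar>g y\<bar>"
      using fg fi False by (cases "\<bar>f y\<bar>"; cases "\<bar>g y\<bar>") auto
    moreover have "0 \<le> real_of_ereal \<bar>f y\<bar>" by (simp add: real_of_ereal_pos)
    ultimately have "(real_of_ereal \<bar>f y\<bar> / \<eta>) powr q y \<le> (real_of_ereal \<bar>g y\<bar> / \<eta>) powr q y"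
      using assms(2,3) y by (intro powr_mono2 divide_right_mono) auto
    thus ?thesis using False fi by (simp add: ennreal_leI)
  qed
qed

lemma norm_mono:
  assumes "\<forall>y\<in>space M. \<bar>f y\<bar> \<le> \<bar>g y\<bar>" "\<forall>y\<in>space M. q y > 0"
  shows "var_lp_norm M q f \<le> var_lp_norm M q g"
  unfolding var_lp_norm_def
proof (rule Inf_mono)
  fix b assume "b \<in> {ereal \<eta> |\<eta>. 0 < \<eta> \<and> var_modular M q g \<eta> \<le> 1}"
  then obtain \<eta> where "b = ereal \<eta>" "0 < \<eta>" "var_modular M q g \<eta> \<le> 1" by auto
  moreover hence "var_modular M q f \<eta> \<le> 1" using modular_mono[OF assms] order_trans by blast
  ultimately show "\<exists>a\<in>{ereal \<eta> |\<eta>. 0 < \<eta> \<and> var_modular M q f \<eta> \<le> 1}. a \<le> b" by auto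
qed

lemma modular_scale:
  assumes "a > 0" "\<eta> > 0"
  shows "var_modular M q (\<lambda>y. ereal (a * h y)) \<eta> = var_modular M q (\<lambda>y. ereal (h y)) (\<eta> / a)"
  unfolding var_modular_def
proof (rule nn_integral_cong)
  fix y
  have e: "real_of_ereal \<bar>ereal (a * h y)\<bar> / \<eta> = real_of_ereal \<bar>ereal (h y)\<bar> / (\<eta> / a)"
    using assms by (simp add: abs_mult field_simps)
  thus "(if \<bar>ereal (a * h y)\<bar> = \<infinity> then \<infinity> else ennreal ((real_of_ereal \<bar>ereal (a * h y)\<bar> / \<eta>) powr q y)) =
        (if \<bar>ereal (h y)\<bar> = \<infinity> then \<infinity> else ennreal ((real_of_ereal \<bar>ereal (h y)\<bar> / (\<eta> / a)) powr q y))"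
    unfolding e by simp
qed

lemma norm_scale_lower:
  assumes "a > 0"
  shows "ereal a * var_lp_norm M q (\<lambda>y. ereal (h y)) \<le> var_lp_norm M q (\<lambda>y. ereal (a * h y))"
  unfolding var_lp_norm_def
proof (rule Inf_greatest)
  fix b assume "b \<in> {ereal \<eta> |\<eta>. 0 < \<eta> \<and> var_modular M q (\<lambda>y. ereal (a * h y)) \<eta> \<le> 1}"
  then obtain \<eta> where e: "b = ereal \<eta>" "0 < \<eta>" "var_modular M q (\<lambda>y. ereal (a * h y)) \<eta> \<le> 1" by auto
  hence "ereal (\<eta> / a) \<in> {ereal \<eta> |\<eta>. 0 < \<eta> \<and> var_modular M q (\<lambda>y. ereal (h y)) \<eta> \<le> 1}"
    using modular_scale[OF assms e(2), of M q h] assms e by auto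
  hence "Inf {ereal \<eta> |\<eta>. 0 < \<eta> \<and> var_modular M q (\<lambda>y. ereal (h y)) \<eta> \<le> 1} \<le> ereal (\<eta> / a)"
    by (rule Inf_lower)
  hence "ereal a * Inf {ereal \<eta> |\<eta>. 0 < \<eta> \<and> var_modular M q (\<lambda>y. ereal (h y)) \<eta> \<le> 1} \<le> ereal a * ereal (\<eta> / a)"
    using assms by (intro ereal_mult_left_mono) auto
  thus "ereal a * Inf {ereal \<eta> |\<eta>. 0 < \<eta> \<and> var_modular M q (\<lambda>y. ereal (h y)) \<eta> \<le> 1} \<le> b"
    using assms e by simp
qed

lemma chi_norm_bounds:
  assumes "B \<in> sets M" "emeasure M B = ennreal V" "V > 0" "\<forall>y\<in>space M. q y > 1"
  shows "ereal (min 1 V) \<le> var_lp_norm M q (\<lambda>y. ereal (indicator B y))"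
    and "var_lp_norm M q (\<lambda>y. ereal (indicator B y)) \<le> ereal (max 1 V)"
proof -
  have mod_eq: "var_modular M q (\<lambda>y. ereal (indicator B y)) \<eta> =
        (\<integral>\<^sup>+ y. ennreal ((1 / \<eta>) powr q y) * indicator B y \<partial>M)" for \<eta>
    unfolding var_modular_def by (rule nn_integral_cong) (auto simp: indicator_def)
  show "ereal (min 1 V) \<le> var_lp_norm M q (\<lambda>y. ereal (indicator B y))"
    unfolding var_lp_norm_def
  proof (rule Inf_greatest)
    fix b assume "b \<in> {ereal \<eta> |\<eta>. 0 < \<eta> \<and> var_modular M q (\<lambda>y. ereal (indicator B y)) \<eta> \<le> 1}"
    then obtain \<eta> where e: "b = ereal \<eta>" "0 < \<eta>" "var_modular M q (\<lambda>y. ereal (indicator B y)) \<eta> \<le> 1" by auto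
    have "min 1 V \<le> \<eta>"
    proof (rule ccontr)
      assume "\<not> min 1 V \<le> \<eta>"
      hence h: "\<eta> < 1" "\<eta> < V" by auto
      have "(\<integral>\<^sup>+ y. ennreal (1 / \<eta>) * indicator B y \<partial>M) \<le> (\<integral>\<^sup>+ y. ennreal ((1 / \<eta>) powr q y) * indicator B y \<partial>M)"
      proof (rule nn_integral_mono)
        fix y assume "y \<in> space M"
        hence "q y > 1" using assms(4) by auto
        hence "(1/\<eta>) powr 1 \<le> (1 / \<eta>) powr q y" using h e(2) by (intro powr_mono) auto
        thus "ennreal (1 / \<eta>) * indicator B y \<le> ennreal ((1 / \<eta>) powr q y) * indicator B y"
          using e(2) by (auto simp: indicator_def intro: ennreal_leI)
      qed
      also have "\<dots> \<le> 1" using e(3) mod_eq by simp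
      finally have "(\<integral>\<^sup>+ y. ennreal (1 / \<eta>) * indicator B y \<partial>M) \<le> 1" .
      moreover have "(\<integral>\<^sup>+ y. ennreal (1 / \<eta>) * indicator B y \<partial>M) = ennreal (1 / \<eta>) * ennreal V"
        using nn_integral_cmult_indicator[OF assms(1), of "ennreal (1/\<eta>)"] assms(2) by (simp add: mult.commute)
      ultimately have "ennreal (1 / \<eta>) * ennreal V \<le> 1" by simp
      hence "ennreal (V / \<eta>) \<le> 1" using e(2) assms(3) by (simp add: ennreal_mult[symmetric])
      hence "V / \<eta> \<le> 1" using e(2) assms(3) by (simp add: ennreal_le_1)
      thus False using h e(2) by (simp add: field_simps)
    qed
    thus "ereal (min 1 V) \<le> b" using e by (simp del: ereal_min add: ereal_min[symmetric])
  qed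
  let ?e = "max 1 V"
  have "var_modular M q (\<lambda>y. ereal (indicator B y)) ?e \<le> 1"
  proof -
    have "(\<integral>\<^sup>+ y. ennreal ((1 / ?e) powr q y) * indicator B y \<partial>M) \<le> (\<integral>\<^sup>+ y. ennreal (1 / ?e) * indicator B y \<partial>M)"
    proof (rule nn_integral_mono)
      fix y assume "y \<in> space M"
      hence q1: "q y > 1" using assms(4) by auto
      have "(1 / ?e) powr q y = (1/?e) powr 1 * (1/?e) powr (q y - 1)"
        using powr_add[of "1/?e" 1 "q y - 1"] by simp
      also have "\<dots> \<le> (1/?e) * 1"
      proof -
        have "(1/?e) powr (q y - 1) \<le> 1" using q1 by (intro powr_le1) auto
        moreover have "(1/?e) powr 1 = 1/?e" by simp
        moreover have "1/?e \<ge> 0" by simp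
        ultimately show ?thesis by (metis mult_left_mono)
      qed
      finally show "ennreal ((1 / ?e) powr q y) * indicator B y \<le> ennreal (1 / ?e) * indicator B y"
        by (auto simp: indicator_def intro: ennreal_leI)
    qed
    also have "\<dots> = ennreal (1 / ?e) * ennreal V"
      using nn_integral_cmult_indicator[OF assms(1), of "ennreal (1/?e)"] assms(2) by (simp add: mult.commute)
    also have "\<dots> = ennreal (V / ?e)" using assms(3) by (simp add: ennreal_mult[symmetric])
    also have "\<dots> \<le> 1" using assms(3) by (simp add: ennreal_le_1 field_simps)
    finally show ?thesis using mod_eq by simp
  qed
  thus "var_lp_norm M q (\<lambda>y. ereal (indicator B y)) \<le> ereal ?e"
    unfolding var_lp_norm_def by (intro Inf_lower) (auto simp del: ereal_max)
qed




lemma avg_bound: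
  fixes M :: "'a measure" and b :: "'a \<Rightarrow> real"
  assumes B: "B \<in> sets M" and mB: "emeasure M B = ennreal V" and V: "V > 0"
    and ib: "integrable M (\<lambda>y. indicator B y * b y)"
  defines "I \<equiv> LINT y|M. \<bar>indicator B y * b y\<bar>"
  defines "c \<equiv> I / V"
  defines "g \<equiv> \<lambda>y. max 0 (c * indicator B y - indicator B y * b y)"
  shows "integrable M g"
    and "(LINT y|M. indicator B y * \<bar>b y - (1/V) * (LINT y|M. indicator B y * b y)\<bar>) \<le> 4 * (LINT y|M. g y)"
proof -
  have iB: "integrable M (indicator B :: 'a \<Rightarrow> real)"
    using integrable_real_indicator[OF B] mB by simp
  have measB: "measure M B = V" using mB V by (simp add: measure_def)
  have intB: "(LINT y|M. indicator B y) = V"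
    using Bochner_Integration.integral_indicator[of M B] measB sets.Int_space_eq2[OF B] by simp
  have icB: "integrable M (\<lambda>y. c * indicator B y)" using iB by simp
  define h where "h = (\<lambda>y. indicator B y * b y - c * indicator B y)"
  have ih: "integrable M h" unfolding h_def using ib icB by simp
  have gh: "g = (\<lambda>y. max 0 (- h y))" unfolding g_def h_def by (auto simp: fun_eq_iff)
  show ig: "integrable M g" unfolding gh using ih by (intro integrable_max) auto
  let ?A = "LINT y|M. indicator B y * b y"
  let ?m = "(1/V) * ?A"
  have habs: "\<bar>h y\<bar> = h y + 2 * g y" for y unfolding gh by auto
  have iah: "integrable M (\<lambda>y. \<bar>h y\<bar>)" using ih by simp
  have Lh: "(LINT y|M. h y) = ?A - c * V"
    unfolding h_def using ib icB intB by (simp add: integral_diff)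
  have AI: "?A \<le> I" unfolding I_def using ib by (intro integral_mono) auto
  have cV: "c * V = I" unfolding c_def using V by simp
  have Lah: "(LINT y|M. \<bar>h y\<bar>) = (LINT y|M. h y) + 2 * (LINT y|M. g y)"
    unfolding habs using ih ig by simp
  hence Lah2: "(LINT y|M. \<bar>h y\<bar>) \<le> 2 * (LINT y|M. g y)" using Lh AI cV by linarith
  have cm: "\<bar>c - ?m\<bar> * V \<le> (LINT y|M. \<bar>h y\<bar>)"
  proof -
    have "(c - ?m) * V = c * V - ?A" using V by (simp add: field_simps)
    hence "\<bar>(c - ?m) * V\<bar> = \<bar>LINT y|M. h y\<bar>" using Lh by (simp add: abs_minus_commute)
    hence "\<bar>c - ?m\<bar> * V = \<bar>LINT y|M. h y\<bar>" using V by (simp add: abs_mult)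
    also have "\<dots> \<le> (LINT y|M. \<bar>h y\<bar>)" by (rule integral_abs_bound)
    finally show ?thesis .
  qed
  have pw: "indicator B y * \<bar>b y - ?m\<bar> \<le> \<bar>h y\<bar> + \<bar>c - ?m\<bar> * indicator B y" for y
    unfolding h_def by (auto simp: indicator_def)
  have "(LINT y|M. indicator B y * \<bar>b y - ?m\<bar>) \<le> (LINT y|M. \<bar>h y\<bar> + \<bar>c - ?m\<bar> * indicator B y)"
  proof (rule integral_mono)
    show "integrable M (\<lambda>y. indicator B y * \<bar>b y - ?m\<bar>)"
    proof -
      have "integrable M (\<lambda>y. \<bar>indicator B y * b y - ?m * indicator B y\<bar>)" using ib iB by simp
      moreover have "(\<lambda>y. \<bar>indicator B y * b y - ?m * indicator B y\<bar>) = (\<lambda>y. indicator B y * \<bar>b y - ?m\<bar>)"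
        by (auto simp: indicator_def fun_eq_iff)
      ultimately show ?thesis by simp
    qed
    show "integrable M (\<lambda>y. \<bar>h y\<bar> + \<bar>c - ?m\<bar> * indicator B y)" using iah iB by simp
  qed (rule pw)
  also have "\<dots> = (LINT y|M. \<bar>h y\<bar>) + \<bar>c - ?m\<bar> * V" using iah iB intB by simp
  also have "\<dots> \<le> 4 * (LINT y|M. g y)" using cm Lah2 by linarith
  finally show "(LINT y|M. indicator B y * \<bar>b y - (1/V) * ?A\<bar>) \<le> 4 * (LINT y|M. g y)" .
qed




theorem mainTheorem12:
  fixes p n :: nat and \<alpha> C :: real and \<mu> :: "qpn measure"
    and b q :: "qpn \<Rightarrow> real"
  assumes "prime p"
    and "0 < \<alpha>" and "\<alpha> < real n"
    and "is_qp_haar p n \<mu>"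
    and "qp_locally_integrable p n \<mu> b"
    and "var_exp_B p n \<mu> q"
    and "C > 0"
    and "\<forall>\<gamma>::int. \<forall>x\<in>Qpn p n.
       var_lp_norm \<mu> q (\<lambda>y. if y \<in> qball p n \<gamma> x then
            ereal (b y) - ereal (ball_vol p n \<gamma> powr (- \<alpha> / real n)) *
              enn2ereal (frac_max_local p n \<mu> \<alpha> (qball p n \<gamma> x) b y)
          else 0)
       / var_lp_norm \<mu> q (\<lambda>y. ereal (indicator (qball p n \<gamma> x) y)) \<le> ereal C"
  shows "qp_BMO p n \<mu> b"
proof -
  have n0: "n > 0" using assms(2,3) by simp
  have sp: "space \<mu> = Qpn p n" and sets: "sets \<mu> = sigma_sets (Qpn p n) {qball p n \<gamma> x | \<gamma> x. x \<in> Qpn p n}"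
    and em: "\<And>\<gamma> x. x \<in> Qpn p n \<Longrightarrow> emeasure \<mu> (qball p n \<gamma> x) = ennreal (ball_vol p n \<gamma>)"
    using assms(4) unfolding is_qp_haar_def ball_vol_def by auto
  have q1: "\<forall>y\<in>space \<mu>. q y > 1" and q0: "\<forall>y\<in>space \<mu>. q y > 0"
    using assms(6) unfolding var_exp_B_def var_exp_P_def by auto
  obtain K :: real where K: "\<And>f. f \<in> borel_measurable \<mu> \<Longrightarrow> var_lp_norm \<mu> q (\<lambda>y. ereal (f y)) < \<infinity> \<Longrightarrow>
        var_lp_norm \<mu> q (\<lambda>y. enn2ereal (hl_maximal p n \<mu> f y)) \<le> ereal K * var_lp_norm \<mu> q (\<lambda>y. ereal (f y))"
    using assms(6) unfolding var_exp_B_def by blast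
  define K' where "K' = max K 0"
  have "\<forall>\<gamma>. \<forall>x\<in>Qpn p n. qp_ball_avg p n \<mu> (\<lambda>y. \<bar>b y - qp_ball_avg p n \<mu> b \<gamma> x\<bar>) \<gamma> x \<le> 4 * (K' * C)"
  proof (intro allI ballI)
    fix \<gamma> x assume x: "x \<in> Qpn p n"
    define B where "B = qball p n \<gamma> x"
    define V where "V = ball_vol p n \<gamma>"
    have V0: "V > 0" unfolding V_def ball_vol_def using prime_gt_1_nat[OF assms(1)] by simp
    have Bs: "B \<in> sets \<mu>" unfolding B_def sets using x by (intro sigma_sets.Basic) auto
    have mB: "emeasure \<mu> B = ennreal V" unfolding B_def V_def using em[OF x] .
    have same: "\<And>y. y \<in> B \<Longrightarrow> qball p n \<gamma> y = B"
      unfolding B_def using qball_same[OF assms(1) n0 x] by blast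
    have ib: "integrable \<mu> (\<lambda>y. indicator B y * b y)"
      using assms(5) x unfolding qp_locally_integrable_def set_integrable_def B_def by auto
    define I where "I = (LINT y|\<mu>. \<bar>indicator B y * b y\<bar>)"
    define c where "c = I / V"
    have I0: "I \<ge> 0" unfolding I_def by simp
    define g where "g = (\<lambda>y. max 0 (c * indicator B y - indicator B y * b y))"
    have ig: "integrable \<mu> g" and avg: "(LINT y|\<mu>. indicator B y * \<bar>b y - (1/V) * (LINT y|\<mu>. indicator B y * b y)\<bar>) \<le> 4 * (LINT y|\<mu>. g y)"
      using avg_bound[OF Bs mB V0 ib] unfolding g_def c_def I_def by auto
    define G where "G = (LINT y|\<mu>. g y)"
    define a where "a = G / V"
    have g0: "g y \<ge> 0" for y unfolding g_def by simp
    have G0: "G \<ge> 0" unfolding G_def using g0 by simp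
    have a0: "a \<ge> 0" unfolding a_def using G0 V0 by simp
    define N where "N = var_lp_norm \<mu> q (\<lambda>y. ereal (indicator B y))"
    have Nlo: "ereal (min 1 V) \<le> N" and Nhi: "N \<le> ereal (max 1 V)"
      unfolding N_def using chi_norm_bounds[OF Bs mB V0 q1] by auto
    obtain N0 where N0: "N = ereal N0" "N0 > 0"
      using Nlo Nhi V0 by (cases N) (auto simp del: ereal_min ereal_max)
    define F where "F = (\<lambda>y. if y \<in> B then
            ereal (b y) - ereal (V powr (- \<alpha> / real n)) *
              enn2ereal (frac_max_local p n \<mu> \<alpha> B b y) else 0)"
    have hyp: "var_lp_norm \<mu> q F / N \<le> ereal C"
      using assms(8) x unfolding F_def N_def B_def V_def by auto
    have FN: "var_lp_norm \<mu> q F \<le> N * ereal C"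
      using hyp N0 by (simp add: ereal_divide_le_pos)
    have intb: "(\<integral>\<^sup>+ z\<in>B. ennreal \<bar>b z\<bar> \<partial>\<mu>) = ennreal I"
    proof -
      have "(\<integral>\<^sup>+ z\<in>B. ennreal \<bar>b z\<bar> \<partial>\<mu>) = (\<integral>\<^sup>+ z. ennreal \<bar>indicator B z * b z\<bar> \<partial>\<mu>)"
        by (rule nn_integral_cong) (auto simp: indicator_def)
      also have "\<dots> = ennreal I" unfolding I_def using ib by (intro nn_integral_eq_integral) auto
      finally show ?thesis .
    qed
    have FMlo: "ereal c \<le> ereal (V powr (- \<alpha> / real n)) * enn2ereal (frac_max_local p n \<mu> \<alpha> B b y)"
      if y: "y \<in> B" for y
    proof -
      have "ennreal (V powr (\<alpha> / real n - 1)) * ennreal I \<le> frac_max_local p n \<mu> \<alpha> B b y"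
        unfolding frac_max_local_def
        using same[OF y] intb unfolding V_def by (intro SUP_upper2[of \<gamma>]) auto
      hence "ennreal (V powr (\<alpha> / real n - 1) * I) \<le> frac_max_local p n \<mu> \<alpha> B b y"
        using I0 by (simp add: ennreal_mult)
      hence le: "ereal (V powr (\<alpha> / real n - 1) * I) \<le> enn2ereal (frac_max_local p n \<mu> \<alpha> B b y)"
        using less_eq_ennreal.rep_eq I0
        by (metis enn2ereal_ennreal mult_nonneg_nonneg powr_ge_zero)
      have "ereal c = ereal (V powr (- \<alpha> / real n)) * ereal (V powr (\<alpha> / real n - 1) * I)"
      proof -
        have "V powr (- \<alpha> / real n) * V powr (\<alpha> / real n - 1) = V powr (-1)"
          using V0 by (simp add: powr_add[symmetric])
        hence "V powr (- \<alpha> / real n) * (V powr (\<alpha> / real n - 1) * I) = I / V"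
          using V0 by (simp add: powr_minus_divide mult.assoc[symmetric])
        thus ?thesis unfolding c_def by simp
      qed
      also have "\<dots> \<le> ereal (V powr (- \<alpha> / real n)) * enn2ereal (frac_max_local p n \<mu> \<alpha> B b y)"
        using le by (intro ereal_mult_left_mono) auto
      finally show ?thesis .
    qed
    have gF: "\<forall>y\<in>space \<mu>. \<bar>ereal (g y)\<bar> \<le> \<bar>F y\<bar>"
    proof
      fix y
      show "\<bar>ereal (g y)\<bar> \<le> \<bar>F y\<bar>"
      proof (cases "y \<in> B \<and> b y < c")
        case False
        hence "g y = 0" unfolding g_def by (auto simp: indicator_def)
        thus ?thesis by (simp add: zero_ereal_def[symmetric])
      next
        case True
        hence gy: "g y = c - b y" unfolding g_def by auto
        let ?X = "ereal (V powr (- \<alpha> / real n)) * enn2ereal (frac_max_local p n \<mu> \<alpha> B b y)"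
        have Fy: "F y = ereal (b y) - ?X" unfolding F_def using True by simp
        have cX: "ereal c \<le> ?X" using FMlo True by blast
        show ?thesis
        proof (cases ?X)
          case (real r)
          thus ?thesis using Fy cX gy True by auto
        next
          case PInf thus ?thesis using Fy by simp
        next
          case MInf thus ?thesis using cX by simp
        qed
      qed
    qed
    have gnorm: "var_lp_norm \<mu> q (\<lambda>y. ereal (g y)) \<le> N * ereal C"
      using norm_mono[OF gF q0] FN by simp
    obtain ng where ng: "var_lp_norm \<mu> q (\<lambda>y. ereal (g y)) = ereal ng" "ng \<ge> 0" "ng \<le> N0 * C"
      using gnorm N0 norm_nonneg[of \<mu> q "\<lambda>y. ereal (g y)"]
      by (cases "var_lp_norm \<mu> q (\<lambda>y. ereal (g y))") auto
    have gm: "g \<in> borel_measurable \<mu>" using ig by auto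
    have Mg: "var_lp_norm \<mu> q (\<lambda>y. enn2ereal (hl_maximal p n \<mu> g y)) \<le> ereal K * ereal ng"
      using K[OF gm] ng(1) by simp
    have intg: "(\<integral>\<^sup>+ z\<in>B. ennreal \<bar>g z\<bar> \<partial>\<mu>) = ennreal G"
    proof -
      have "(\<integral>\<^sup>+ z\<in>B. ennreal \<bar>g z\<bar> \<partial>\<mu>) = (\<integral>\<^sup>+ z. ennreal (g z) \<partial>\<mu>)"
        by (rule nn_integral_cong) (auto simp: indicator_def g_def)
      also have "\<dots> = ennreal G" unfolding G_def using ig g0 by (intro nn_integral_eq_integral) auto
      finally show ?thesis .
    qed
    have Mlo: "\<bar>ereal (a * indicator B y)\<bar> \<le> \<bar>enn2ereal (hl_maximal p n \<mu> g y)\<bar>" for y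
    proof (cases "y \<in> B")
      case False thus ?thesis by (simp add: zero_ereal_def[symmetric] enn2ereal_nonneg)
    next
      case True
      have "ennreal (1 / V) * ennreal G \<le> hl_maximal p n \<mu> g y"
        unfolding hl_maximal_def using same[OF True] intg unfolding V_def
        by (intro SUP_upper2[of \<gamma>]) auto
      hence "ennreal a \<le> hl_maximal p n \<mu> g y" unfolding a_def using V0
        by (simp add: ennreal_mult[symmetric] G0)
      hence "ereal a \<le> enn2ereal (hl_maximal p n \<mu> g y)"
        using less_eq_ennreal.rep_eq a0 by (metis enn2ereal_ennreal)
      thus ?thesis using True a0 by (simp add: enn2ereal_nonneg)
    qed
    have aK: "a \<le> K' * C"
    proof (cases "a = 0")
      case True thus ?thesis unfolding K'_def using assms(7) by simp
    next
      case False
      hence apos: "a > 0" using a0 by simp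
      have "ereal a * N \<le> var_lp_norm \<mu> q (\<lambda>y. ereal (a * indicator B y))"
        unfolding N_def by (rule norm_scale_lower[OF apos])
      also have "\<dots> \<le> var_lp_norm \<mu> q (\<lambda>y. enn2ereal (hl_maximal p n \<mu> g y))"
        using Mlo q0 by (intro norm_mono) auto
      also have "\<dots> \<le> ereal (K * ng)" using Mg by simp
      finally have "a * N0 \<le> K * ng" using N0 by simp
      also have "K * ng \<le> K' * ng" unfolding K'_def using ng(2) by (intro mult_right_mono) auto
      also have "\<dots> \<le> K' * (N0 * C)" unfolding K'_def using ng(3) by (intro mult_left_mono) auto
      finally have "a * N0 \<le> (K' * C) * N0" by (simp add: algebra_simps)
      thus ?thesis using N0(2) by simp
    qed
    have "qp_ball_avg p n \<mu> (\<lambda>y. \<bar>b y - qp_ball_avg p n \<mu> b \<gamma> x\<bar>) \<gamma> x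
        = (1/V) * (LINT y|\<mu>. indicator B y * \<bar>b y - (1/V) * (LINT y|\<mu>. indicator B y * b y)\<bar>)"
      unfolding qp_ball_avg_def set_lebesgue_integral_def B_def V_def by simp
    also have "\<dots> \<le> (1/V) * (4 * G)" using avg V0 unfolding G_def by (intro mult_left_mono) auto
    also have "\<dots> = 4 * a" unfolding a_def by simp
    also have "\<dots> \<le> 4 * (K' * C)" using aK by simp
    finally show "qp_ball_avg p n \<mu> (\<lambda>y. \<bar>b y - qp_ball_avg p n \<mu> b \<gamma> x\<bar>) \<gamma> x \<le> 4 * (K' * C)" .
  qed
  thus ?thesis unfolding qp_BMO_def using assms(5) by blast
qed


end
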